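(* For every integer $p\ge 2$, the loop $C_p$ is topolinear, i.e., its graph $\{(u,v,w)\in Q_{2p}^3: w=u\ast v\}$ is a topolinear set.
   Context: Let $Q_{2p}=\{x_\zeta : x\in\mathbb{Z}_p,\ \zeta\in\{0,1\}\}$. The loop $C_p$ is the operation on $Q_{2p}$ given by $x_\zeta\ast y_\xi=((-1)^\xi x+y+\zeta\xi)_{\zeta\oplus\xi}$, with subscripts modulo $2$ and the rest modulo $p$. An isotopism of $Q_{2p}^3$ is a map $(u,v,w)\mapsto(\tau_1u,\tau_2v,\tau_3w)$ with $\tau_i$ permutations of $Q_{2p}$; a set $A$ is topolinear if the group of isotopisms mapping $A$ onto $A$ contains a subgroup of cardinality $|A|$ acting transitively on $A$. *)

theory Defs
  imports "HOL-Combinatorics.Permutations"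
begin

text \<open>Elements x_zeta of Q_2p are represented as pairs (x, zeta) of integers
  with 0 <= x < p and zeta in {0,1}.\<close>

type_synonym elt = "int \<times> int"

definition Qset :: "int \<Rightarrow> elt set" where
  "Qset p = {0..<p} \<times> {0..<2}"

definition Cop :: "int \<Rightarrow> elt \<Rightarrow> elt \<Rightarrow> elt" where
  "Cop p u v = (case u of (x, z) \<Rightarrow> case v of (y, w) \<Rightarrow>
      (((-1) ^ nat w * x + y + z * w) mod p, (z + w) mod 2))"

definition loop_graph :: "int \<Rightarrow> (elt \<times> elt \<times> elt) set" where
  "loop_graph p = {(u, v, w). u \<in> Qset p \<and> v \<in> Qset p \<and> w = Cop p u v}"

type_synonym 'a iso = "('a \<Rightarrow> 'a) \<times> ('a \<Rightarrow> 'a) \<times> ('a \<Rightarrow> 'a)"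

definition is_isotopism :: "'a set \<Rightarrow> 'a iso \<Rightarrow> bool" where
  "is_isotopism Q t = (case t of (t1, t2, t3) \<Rightarrow>
      t1 permutes Q \<and> t2 permutes Q \<and> t3 permutes Q)"

definition iso_apply :: "'a iso \<Rightarrow> 'a \<times> 'a \<times> 'a \<Rightarrow> 'a \<times> 'a \<times> 'a" where
  "iso_apply t a = (case t of (t1, t2, t3) \<Rightarrow> case a of (u, v, w) \<Rightarrow> (t1 u, t2 v, t3 w))"

definition iso_comp :: "'a iso \<Rightarrow> 'a iso \<Rightarrow> 'a iso" where
  "iso_comp s t = (case s of (s1, s2, s3) \<Rightarrow> case t of (t1, t2, t3) \<Rightarrow>
      (s1 \<circ> t1, s2 \<circ> t2, s3 \<circ> t3))"

definition iso_inv :: "'a iso \<Rightarrow> 'a iso" where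
  "iso_inv t = (case t of (t1, t2, t3) \<Rightarrow> (inv t1, inv t2, inv t3))"

definition autotopies :: "'a set \<Rightarrow> ('a \<times> 'a \<times> 'a) set \<Rightarrow> 'a iso set" where
  "autotopies Q A = {t. is_isotopism Q t \<and> iso_apply t ` A = A}"

definition topolinear :: "'a set \<Rightarrow> ('a \<times> 'a \<times> 'a) set \<Rightarrow> bool" where
  "topolinear Q A = (\<exists>H. H \<subseteq> autotopies Q A
      \<and> (id, id, id) \<in> H
      \<and> (\<forall>s\<in>H. \<forall>t\<in>H. iso_comp s t \<in> H)
      \<and> (\<forall>t\<in>H. iso_inv t \<in> H)
      \<and> finite H \<and> card H = card A
      \<and> (\<forall>a\<in>A. \<forall>b\<in>A. \<exists>h\<in>H. iso_apply h a = b))"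

end

theory Submission
  imports Defs
begin

definition sg :: "int \<Rightarrow> int" where "sg n = (if even n then 1 else -1)"

type_synonym idx = "int \<times> int \<times> int \<times> int"

definition g1 :: "int \<Rightarrow> idx \<Rightarrow> elt \<Rightarrow> elt" where
  "g1 p i q = (case i of (s,t,a,k) \<Rightarrow> case q of (x,z) \<Rightarrow> ((sg (s+t) * x + a) mod p, (z+s) mod 2))"
definition g2 :: "int \<Rightarrow> idx \<Rightarrow> elt \<Rightarrow> elt" where
  "g2 p i q = (case i of (s,t,a,k) \<Rightarrow> case q of (y,w) \<Rightarrow>
     ((sg s * y + k - sg (t+w) * a + (t-s)*w) mod p, (w+t) mod 2))"
definition g3 :: "int \<Rightarrow> idx \<Rightarrow> elt \<Rightarrow> elt" where
  "g3 p i q = (case i of (s,t,a,k) \<Rightarrow> case q of (z,e) \<Rightarrow>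
     ((sg s * z + k + t * ((e+s) mod 2)) mod p, (e+s+t) mod 2))"

definition mul :: "int \<Rightarrow> idx \<Rightarrow> idx \<Rightarrow> idx" where
  "mul p i j = (case i of (s,t,a,k) \<Rightarrow> case j of (s',t',a',k') \<Rightarrow>
     ((s+s') mod 2, (t+t') mod 2, (sg (s+t) * a' + a) mod p, (k + sg s * k' + sg s * t' * s + t * t') mod p))"

lemma bit: "(s::int) \<in> {0..<2} \<Longrightarrow> s = 0 \<or> s = 1" by auto

lemma g1_comp: assumes "s \<in> {0..<2}" "s' \<in> {0..<2}" "t \<in> {0..<2}" "t' \<in> {0..<2}" "z \<in> {0..<2}"
  shows "g1 p (s,t,a,k) (g1 p (s',t',a',k') (x,z)) = g1 p (mul p (s,t,a,k) (s',t',a',k')) (x,z)"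
  using bit[OF assms(1)] bit[OF assms(2)] bit[OF assms(3)] bit[OF assms(4)] bit[OF assms(5)]
  by (auto simp: g1_def mul_def sg_def mod_simps algebra_simps)

lemma g2_comp: assumes "s \<in> {0..<2}" "s' \<in> {0..<2}" "t \<in> {0..<2}" "t' \<in> {0..<2}" "z \<in> {0..<2}"
  shows "g2 p (s,t,a,k) (g2 p (s',t',a',k') (x,z)) = g2 p (mul p (s,t,a,k) (s',t',a',k')) (x,z)"
  using bit[OF assms(1)] bit[OF assms(2)] bit[OF assms(3)] bit[OF assms(4)] bit[OF assms(5)]
  apply (elim disjE) apply (simp_all add: g2_def mul_def sg_def) apply (simp_all only: mod_eq_dvd_iff) apply (simp_all add: minus_div_mult_eq_mod[symmetric] algebra_simps)
  done

lemma g3_comp: assumes "s \<in> {0..<2}" "s' \<in> {0..<2}" "t \<in> {0..<2}" "t' \<in> {0..<2}" "z \<in> {0..<2}"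
  shows "g3 p (s,t,a,k) (g3 p (s',t',a',k') (x,z)) = g3 p (mul p (s,t,a,k) (s',t',a',k')) (x,z)"
  using bit[OF assms(1)] bit[OF assms(2)] bit[OF assms(3)] bit[OF assms(4)] bit[OF assms(5)]
  apply (elim disjE) apply (simp_all add: g3_def mul_def sg_def) apply (simp_all only: mod_eq_dvd_iff) apply (simp_all add: minus_div_mult_eq_mod[symmetric] algebra_simps) done

lemma auto_top: assumes "s \<in> {0..<2}" "t \<in> {0..<2}" "z \<in> {0..<2}" "w \<in> {0..<2}"
  shows "g3 p (s,t,a,k) (Cop p (x,z) (y,w)) = Cop p (g1 p (s,t,a,k) (x,z)) (g2 p (s,t,a,k) (y,w))"
  using bit[OF assms(1)] bit[OF assms(2)] bit[OF assms(3)] bit[OF assms(4)]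
  apply (elim disjE) apply (simp_all add: g1_def g2_def g3_def Cop_def sg_def) apply (simp_all only: mod_eq_dvd_iff) apply (simp_all add: minus_div_mult_eq_mod[symmetric] algebra_simps) done

definition invi :: "int \<Rightarrow> idx \<Rightarrow> idx" where
  "invi p i = (case i of (s,t,a,k) \<Rightarrow> (s, t, (- sg (s+t) * a) mod p, (- sg s * k - t*s - sg s * t) mod p))"

definition Idx :: "int \<Rightarrow> idx set" where
  "Idx p = {0..<2} \<times> {0..<2} \<times> {0..<p} \<times> {0..<p}"

lemma mul_inv1: assumes "s \<in> {0..<2}" "t \<in> {0..<2}" "a \<in> {0..<p}" "k \<in> {0..<p}"
  shows "mul p (s,t,a,k) (invi p (s,t,a,k)) = (0,0,0,0)"
  using bit[OF assms(1)] bit[OF assms(2)]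
  apply (elim disjE) apply (simp_all add: mul_def invi_def sg_def)
  apply (simp_all only: mod_eq_dvd_iff[where b=0, simplified] mod_0_imp_dvd) 
  apply (simp_all add: minus_div_mult_eq_mod[symmetric] algebra_simps)
  done

lemma mul_inv2: assumes "s \<in> {0..<2}" "t \<in> {0..<2}" "a \<in> {0..<p}" "k \<in> {0..<p}"
  shows "mul p (invi p (s,t,a,k)) (s,t,a,k) = (0,0,0,0)"
  using bit[OF assms(1)] bit[OF assms(2)]
  apply (elim disjE) apply (simp_all add: mul_def invi_def sg_def)
  apply (simp_all add: minus_div_mult_eq_mod[symmetric] algebra_simps)
  done


lemma invi_Idx: "p > 0 \<Longrightarrow> i \<in> Idx p \<Longrightarrow> invi p i \<in> Idx p"
  by (auto simp: Idx_def invi_def)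

lemma mul_Idx: "p > 0 \<Longrightarrow> i \<in> Idx p \<Longrightarrow> j \<in> Idx p \<Longrightarrow> mul p i j \<in> Idx p"
  by (auto simp: Idx_def mul_def)

lemma g1_Q: "p > 0 \<Longrightarrow> q \<in> Qset p \<Longrightarrow> g1 p i q \<in> Qset p"
  by (auto simp: Qset_def g1_def split: prod.splits)
lemma g2_Q: "p > 0 \<Longrightarrow> q \<in> Qset p \<Longrightarrow> g2 p i q \<in> Qset p"
  by (auto simp: Qset_def g2_def split: prod.splits)
lemma g3_Q: "p > 0 \<Longrightarrow> q \<in> Qset p \<Longrightarrow> g3 p i q \<in> Qset p"
  by (auto simp: Qset_def g3_def split: prod.splits)
lemma Cop_Q: "p > 0 \<Longrightarrow> Cop p u v \<in> Qset p"
  by (auto simp: Qset_def Cop_def split: prod.splits)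

definition f1 where "f1 p i q = (if q \<in> Qset p then g1 p i q else q)"
definition f2 where "f2 p i q = (if q \<in> Qset p then g2 p i q else q)"
definition f3 where "f3 p i q = (if q \<in> Qset p then g3 p i q else q)"

definition hh :: "int \<Rightarrow> idx \<Rightarrow> elt iso" where
  "hh p i = (f1 p i, f2 p i, f3 p i)"

lemma f1_comp: assumes "p > 0" "i \<in> Idx p" "j \<in> Idx p"
  shows "f1 p i \<circ> f1 p j = f1 p (mul p i j)"
proof
  fix q
  show "(f1 p i \<circ> f1 p j) q = f1 p (mul p i j) q"
  proof (cases "q \<in> Qset p")
    case True
    obtain s t a k where i: "i = (s,t,a,k)" by (cases i) auto
    obtain s' t' a' k' where j: "j = (s',t',a',k')" by (cases j) auto
    obtain x z where q: "q = (x,z)" by (cases q) auto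
    have "g1 p j q \<in> Qset p" using g1_Q[OF assms(1) True] .
    then show ?thesis using True assms g1_comp[of s s' t t' z p a k a' k' x]
      by (simp add: f1_def i j q Idx_def Qset_def)
  qed (simp add: f1_def)
qed

lemma f2_comp: assumes "p > 0" "i \<in> Idx p" "j \<in> Idx p"
  shows "f2 p i \<circ> f2 p j = f2 p (mul p i j)"
proof
  fix q
  show "(f2 p i \<circ> f2 p j) q = f2 p (mul p i j) q"
  proof (cases "q \<in> Qset p")
    case True
    obtain s t a k where i: "i = (s,t,a,k)" by (cases i) auto
    obtain s' t' a' k' where j: "j = (s',t',a',k')" by (cases j) auto
    obtain x z where q: "q = (x,z)" by (cases q) auto
    have "g2 p j q \<in> Qset p" using g2_Q[OF assms(1) True] .
    then show ?thesis using True assms g2_comp[of s s' t t' z p a k a' k' x]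
      by (simp add: f2_def i j q Idx_def Qset_def)
  qed (simp add: f2_def)
qed

lemma f3_comp: assumes "p > 0" "i \<in> Idx p" "j \<in> Idx p"
  shows "f3 p i \<circ> f3 p j = f3 p (mul p i j)"
proof
  fix q
  show "(f3 p i \<circ> f3 p j) q = f3 p (mul p i j) q"
  proof (cases "q \<in> Qset p")
    case True
    obtain s t a k where i: "i = (s,t,a,k)" by (cases i) auto
    obtain s' t' a' k' where j: "j = (s',t',a',k')" by (cases j) auto
    obtain x z where q: "q = (x,z)" by (cases q) auto
    have "g3 p j q \<in> Qset p" using g3_Q[OF assms(1) True] .
    then show ?thesis using True assms g3_comp[of s s' t t' z p a k a' k' x]
      by (simp add: f3_def i j q Idx_def Qset_def)
  qed (simp add: f3_def)
qed

lemma f_e: assumes "p > 0"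
  shows "f1 p (0,0,0,0) = id" "f2 p (0,0,0,0) = id" "f3 p (0,0,0,0) = id"
  by (auto simp: f1_def f2_def f3_def g1_def g2_def g3_def sg_def Qset_def fun_eq_iff)

lemma hh_comp: "p > 0 \<Longrightarrow> i \<in> Idx p \<Longrightarrow> j \<in> Idx p \<Longrightarrow> iso_comp (hh p i) (hh p j) = hh p (mul p i j)"
  by (simp add: iso_comp_def hh_def f1_comp f2_comp f3_comp)

lemma hh_e: "p > 0 \<Longrightarrow> hh p (0,0,0,0) = (id,id,id)"
  by (simp add: hh_def f_e)

lemma mul_inv: assumes "i \<in> Idx p"
  shows "mul p i (invi p i) = (0,0,0,0)" "mul p (invi p i) i = (0,0,0,0)"
  using assms mul_inv1 mul_inv2 by (auto simp: Idx_def)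

lemma f_inv: assumes "p > 0" "i \<in> Idx p"
  shows "inv (f1 p i) = f1 p (invi p i)" "inv (f2 p i) = f2 p (invi p i)" "inv (f3 p i) = f3 p (invi p i)"
    "bij (f1 p i)" "bij (f2 p i)" "bij (f3 p i)"
proof -
  have ii: "invi p i \<in> Idx p" using invi_Idx assms by auto
  note m = mul_inv[OF assms(2)]
  show "inv (f1 p i) = f1 p (invi p i)" "bij (f1 p i)"
    using f1_comp[OF assms ii] f1_comp[OF assms(1) ii assms(2)] m f_e[OF assms(1)]
    by (auto intro: inv_unique_comp o_bij)
  show "inv (f2 p i) = f2 p (invi p i)" "bij (f2 p i)"
    using f2_comp[OF assms ii] f2_comp[OF assms(1) ii assms(2)] m f_e[OF assms(1)]
    by (auto intro: inv_unique_comp o_bij)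
  show "inv (f3 p i) = f3 p (invi p i)" "bij (f3 p i)"
    using f3_comp[OF assms ii] f3_comp[OF assms(1) ii assms(2)] m f_e[OF assms(1)]
    by (auto intro: inv_unique_comp o_bij)
qed

lemma hh_inv: "p > 0 \<Longrightarrow> i \<in> Idx p \<Longrightarrow> iso_inv (hh p i) = hh p (invi p i)"
  by (simp add: iso_inv_def hh_def f_inv)

lemma perm_of: "bij f \<Longrightarrow> (\<And>x. x \<notin> S \<Longrightarrow> f x = x) \<Longrightarrow> f permutes S"
  unfolding permutes_def bij_iff by blast

lemma hh_isotop: assumes "p > 0" "i \<in> Idx p" shows "is_isotopism (Qset p) (hh p i)"
proof -
  have "f1 p i permutes Qset p" by (rule perm_of[OF f_inv(4)[OF assms]]) (simp add: f1_def)
  moreover have "f2 p i permutes Qset p" by (rule perm_of[OF f_inv(5)[OF assms]]) (simp add: f2_def)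
  moreover have "f3 p i permutes Qset p" by (rule perm_of[OF f_inv(6)[OF assms]]) (simp add: f3_def)
  ultimately show ?thesis by (simp add: is_isotopism_def hh_def)
qed

lemma iso_apply_comp: "iso_apply (iso_comp s t) x = iso_apply s (iso_apply t x)"
  by (auto simp: iso_apply_def iso_comp_def split: prod.splits)

lemma hh_cancel: assumes "p > 0" "i \<in> Idx p"
  shows "iso_apply (hh p (invi p i)) (iso_apply (hh p i) b) = b"
    "iso_apply (hh p i) (iso_apply (hh p (invi p i)) b) = b"
proof -
  have ii: "invi p i \<in> Idx p" using invi_Idx assms by auto
  have idb: "iso_apply (id,id,id) b = b" by (simp add: iso_apply_def split: prod.splits)
  have "iso_apply (hh p (invi p i)) (iso_apply (hh p i) b) = iso_apply (iso_comp (hh p (invi p i)) (hh p i)) b"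
    by (simp add: iso_apply_comp)
  also have "\<dots> = b" using hh_comp[OF assms(1) ii assms(2)] mul_inv[OF assms(2)] hh_e[OF assms(1)] idb by simp
  finally show "iso_apply (hh p (invi p i)) (iso_apply (hh p i) b) = b" .
  have "iso_apply (hh p i) (iso_apply (hh p (invi p i)) b) = iso_apply (iso_comp (hh p i) (hh p (invi p i))) b"
    by (simp add: iso_apply_comp)
  also have "\<dots> = b" using hh_comp[OF assms ii] mul_inv[OF assms(2)] hh_e[OF assms(1)] idb by simp
  finally show "iso_apply (hh p i) (iso_apply (hh p (invi p i)) b) = b" .
qed

lemma hh_maps: assumes "p > 0" "i \<in> Idx p" "b \<in> loop_graph p"
  shows "iso_apply (hh p i) b \<in> loop_graph p"
proof -
  obtain u v where b: "b = (u, v, Cop p u v)" and u: "u \<in> Qset p" and v: "v \<in> Qset p"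
    using assms(3) by (auto simp: loop_graph_def)
  obtain s t a k where i: "i = (s,t,a,k)" by (cases i) auto
  obtain x z where uu: "u = (x,z)" by (cases u) auto
  obtain y w where vv: "v = (y,w)" by (cases v) auto
  have "g3 p i (Cop p u v) = Cop p (g1 p i u) (g2 p i v)"
    using auto_top[of s t z w p a k x y] assms(2) u v by (simp add: i uu vv Idx_def Qset_def)
  then show ?thesis using u v g1_Q g2_Q Cop_Q assms(1)
    by (simp add: b iso_apply_def hh_def f1_def f2_def f3_def loop_graph_def)
qed

lemma hh_auto: assumes "p > 0" "i \<in> Idx p"
  shows "hh p i \<in> autotopies (Qset p) (loop_graph p)"
proof -
  have ii: "invi p i \<in> Idx p" using invi_Idx assms by auto
  have "iso_apply (hh p i) ` loop_graph p = loop_graph p"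
  proof
    show "iso_apply (hh p i) ` loop_graph p \<subseteq> loop_graph p" using hh_maps[OF assms] by blast
    show "loop_graph p \<subseteq> iso_apply (hh p i) ` loop_graph p"
    proof
      fix b assume b: "b \<in> loop_graph p"
      have "iso_apply (hh p i) (iso_apply (hh p (invi p i)) b) = b"
        by (rule hh_cancel(2)[OF assms])
      then show "b \<in> iso_apply (hh p i) ` loop_graph p"
        using hh_maps[OF assms(1) ii b] by force
    qed
  qed
  then show ?thesis using hh_isotop assms by (simp add: autotopies_def)
qed

lemma hh_inj: assumes "p > 0" shows "inj_on (hh p) (Idx p)"
proof
  fix i j assume ij: "i \<in> Idx p" "j \<in> Idx p" "hh p i = hh p j"
  obtain s t a k where i: "i = (s,t,a,k)" by (cases i) auto
  obtain s' t' a' k' where j: "j = (s',t',a',k')" by (cases j) auto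
  have q0: "(0,0) \<in> Qset p" using assms by (simp add: Qset_def)
  have "f1 p i (0,0) = f1 p j (0,0)" "f2 p i (0,0) = f2 p j (0,0)"
    using ij(3) by (simp_all add: hh_def)
  then have e1: "(a mod p, s mod 2) = (a' mod p, s' mod 2)"
    and e2: "((k - sg t * a) mod p, t mod 2) = ((k' - sg t' * a') mod p, t' mod 2)"
    using q0 by (simp_all add: f1_def f2_def g1_def g2_def i j)
  have r: "s = s'" "t = t'" "a = a'" using e1 e2 ij(1,2) by (auto simp: i j Idx_def)
  then have "(k - sg t * a) mod p = (k' - sg t * a) mod p" using e2 by simp
  then have "p dvd (k - sg t * a) - (k' - sg t * a)" by (simp only: mod_eq_dvd_iff)
  then have "p dvd k - k'" by simp
  then have "k mod p = k' mod p" by (simp only: mod_eq_dvd_iff)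
  then have "k = k'" using ij(1,2) by (simp add: i j Idx_def)
  then show "i = j" using r by (simp add: i j)
qed

lemma card_A: assumes "p > 0" shows "card (loop_graph p) = card (Idx p)"
proof -
  have "loop_graph p = (\<lambda>(u,v). (u,v,Cop p u v)) ` (Qset p \<times> Qset p)"
    by (auto simp: loop_graph_def)
  moreover have "inj_on (\<lambda>(u,v). (u,v,Cop p u v)) (Qset p \<times> Qset p)"
    by (auto simp: inj_on_def)
  ultimately have "card (loop_graph p) = card (Qset p \<times> Qset p)"
    by (simp add: card_image)
  also have "\<dots> = card (Idx p)"
    by (simp add: Qset_def Idx_def card_cartesian_product)
  finally show ?thesis .
qed

lemma reach: assumes "p > 0" "b \<in> loop_graph p"
  shows "\<exists>i\<in>Idx p. iso_apply (hh p i) ((0,0),(0,0),(0,0)) = b"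
proof -
  obtain u v where b: "b = (u, v, Cop p u v)" and u: "u \<in> Qset p" and v: "v \<in> Qset p"
    using assms(2) by (auto simp: loop_graph_def)
  obtain x z where uu: "u = (x,z)" by (cases u) auto
  obtain y w where vv: "v = (y,w)" by (cases v) auto
  define i where "i = (z, w, x, (y + sg w * x) mod p)"
  have iI: "i \<in> Idx p" using u v assms(1) by (simp add: i_def Idx_def uu vv Qset_def)
  have q0: "(0,0) \<in> Qset p" using assms by (simp add: Qset_def)
  have c0: "Cop p (0,0) (0,0) = (0,0)" by (simp add: Cop_def)
  have h1: "f1 p i (0,0) = u" using q0 u by (simp add: f1_def g1_def i_def uu Qset_def)
  have yy: "((y + sg w * x) mod p - sg w * x) mod p = y" using v
    by (simp add: mod_diff_left_eq vv Qset_def)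
  have h2: "f2 p i (0,0) = v" using q0 v yy
    by (simp add: f2_def g2_def i_def vv Qset_def)
  have "hh p i \<in> autotopies (Qset p) (loop_graph p)" using hh_auto assms(1) iI by blast
  have "iso_apply (hh p i) ((0,0),(0,0),(0,0)) \<in> loop_graph p"
    using hh_maps[OF assms(1) iI] q0 c0 by (simp add: loop_graph_def)
  then have "iso_apply (hh p i) ((0,0),(0,0),(0,0)) = b"
    using h1 h2 by (simp add: iso_apply_def hh_def loop_graph_def b)
  then show ?thesis using iI by blast
qed

theorem corollary1:
  fixes p :: int
  assumes "p \<ge> 2"
  shows "topolinear (Qset p) (loop_graph p)"
proof -
  have p: "p > 0" using assms by simp
  define H where "H = hh p ` Idx p"
  have eI: "(0,0,0,0) \<in> Idx p" using p by (simp add: Idx_def)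
  have "H \<subseteq> autotopies (Qset p) (loop_graph p)" using hh_auto p by (auto simp: H_def)
  moreover have "(id,id,id) \<in> H" using hh_e[OF p] eI unfolding H_def by (metis image_eqI)
  moreover have "\<forall>s\<in>H. \<forall>t\<in>H. iso_comp s t \<in> H"
    using hh_comp[OF p] mul_Idx[OF p] by (auto simp: H_def)
  moreover have "\<forall>t\<in>H. iso_inv t \<in> H"
    using hh_inv[OF p] invi_Idx[OF p] by (auto simp: H_def)
  moreover have "finite H" by (simp add: H_def Idx_def)
  moreover have "card H = card (loop_graph p)"
    using card_image[OF hh_inj[OF p]] card_A[OF p] by (simp add: H_def)
  moreover have "\<forall>a\<in>loop_graph p. \<forall>b\<in>loop_graph p. \<exists>h\<in>H. iso_apply h a = b"
  proof (intro ballI)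
    fix a b assume a: "a \<in> loop_graph p" and b: "b \<in> loop_graph p"
    obtain i where i: "i \<in> Idx p" "iso_apply (hh p i) ((0,0),(0,0),(0,0)) = a" using reach[OF p a] by blast
    obtain j where j: "j \<in> Idx p" "iso_apply (hh p j) ((0,0),(0,0),(0,0)) = b" using reach[OF p b] by blast
    have ii: "invi p i \<in> Idx p" using invi_Idx p i by auto
    have "iso_apply (hh p (invi p i)) a = ((0,0),(0,0),(0,0))"
      using hh_cancel(1)[OF p i(1), of "((0,0),(0,0),(0,0))"] i(2) by simp
    then have "iso_apply (iso_comp (hh p j) (hh p (invi p i))) a = b"
      unfolding iso_apply_comp using j(2) by simp
    moreover have "iso_comp (hh p j) (hh p (invi p i)) \<in> H"
      using hh_comp[OF p j(1) ii] mul_Idx[OF p j(1) ii] by (simp add: H_def)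
    ultimately show "\<exists>h\<in>H. iso_apply h a = b" by blast
  qed
  ultimately show ?thesis unfolding topolinear_def by blast
qed

end
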